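(* Let $F$ be a tree ensemble with input dimension $n$ and output dimension $1$, let $V_f$ be a set of variables referenced by $F$, let $\bar c=(c_1,\dots,c_n)\in\mathcal D^n$ and $d=f_{bin}(\bar c;F)$. Let $I\subseteq\{1,\dots,n\}$ be the set returned by the following procedure: set $S=\emptyset$ and $\hat x_i=\alpha(\{c_i\})$ for all $i$; for $i=1,\dots,n$ in order: set $\hat x_i=\top$; if $i\in V_f$, then if $\mathrm{Valid}(\hat x_1,\dots,\hat x_n)$ holds put $S:=S\cup\{i\}$, and otherwise reset $\hat x_i=\alpha(\{c_i\})$; finally return $I=V_f\setminus S$. Here $\mathrm{Valid}(\hat x_1,\dots,\hat x_n)$ holds iff $f_{bin}(\bar x;F)=d$ for every $\bar x\in\gamma(\hat x_1)\times\dots\times\gamma(\hat x_n)$. Then $E=\{(x_i,c_i):i\in I\}$ is a minimal explanation for the prediction $f_{bin}(\bar c;F)=d$: $E$ is valid, and no proper subset of $E$ is valid.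
   Context: $\mathcal{D}\subset\mathbb{R}$ is a fixed finite nonempty set. For nonempty $V\subseteq\mathcal D$, $\alpha(V)=[\min V,\max V]$, and $\gamma([l,u])=\{v\in\mathcal D:l\le v\le u\}$; $\top=\alpha(\mathcal D)$, so $\gamma(\top)=\mathcal D$ and $\gamma(\alpha(\{c\}))=\{c\}$. Decision tree $T=\{(X_1,y_1),\dots,(X_k,y_k)\}$: $X_1,\dots,X_k$ partition $\mathcal D^n$, $y_j\in\mathbb R$, $t(\bar x;T)=y_j$ iff $\bar x\in X_j$. Tree ensemble $F=(T_1,\dots,T_b)$: $f(\bar x;F)=\sum_i t(\bar x;T_i)$. Binary classifier: $f_{bin}(\bar x;F)=1$ if $1/(1+e^{-f(\bar x;F)})>0.5$, else $0$. Variables referenced: $V_f\subseteq\{1,\dots,n\}$ is such that, for every tree of $F$ and every leaf region $X_j$, membership $\bar x\in X_j$ does not depend on the coordinates $x_i$ with $i\notin V_f$ (i.e. $V_f$ contains the union of the coordinates tested by the decision rules of the trees). Valid explanation: $E\subseteq\{(x_1,c_1),\dots,(x_n,c_n)\}$ is valid for the prediction $f_{bin}(\bar c;F)=d$ iff every $\bar x\in\mathcal D^n$ with $x_i=c_i$ for all $(x_i,c_i)\in E$ satisfies $f_{bin}(\bar x;F)=d$. A valid explanation is minimal iff none of its proper subsets is valid. *)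

theory Defs
  imports "HOL-Library.FuncSet" Complex_Main
begin

definition points :: "real set \<Rightarrow> nat \<Rightarrow> (nat \<Rightarrow> real) set" where
  "points D n = PiE {1..n} (\<lambda>_. D)"

type_synonym ival = "real \<times> real"

definition alpha :: "real set \<Rightarrow> ival" where
  "alpha V = (Min V, Max V)"

definition gamma :: "real set \<Rightarrow> ival \<Rightarrow> real set" where
  "gamma D I = {v \<in> D. fst I \<le> v \<and> v \<le> snd I}"

definition top_iv :: "real set \<Rightarrow> ival" where
  "top_iv D = alpha D"

text \<open>A decision tree: a list of leaves (X_j, y_j) whose regions partition D^n.\<close>
type_synonym tree = "((nat \<Rightarrow> real) set \<times> real) list"

definition is_tree :: "real set \<Rightarrow> nat \<Rightarrow> tree \<Rightarrow> bool" where
  "is_tree D n T \<longleftrightarrow>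
     (\<forall>j < length T. fst (T ! j) \<noteq> {} \<and> fst (T ! j) \<subseteq> points D n) \<and>
     (\<forall>j < length T. \<forall>k < length T. j \<noteq> k \<longrightarrow> fst (T ! j) \<inter> fst (T ! k) = {}) \<and>
     (\<Union>j < length T. fst (T ! j)) = points D n"

definition tree_val :: "(nat \<Rightarrow> real) \<Rightarrow> tree \<Rightarrow> real" where
  "tree_val x T = (THE y. \<exists>j < length T. x \<in> fst (T ! j) \<and> y = snd (T ! j))"

definition ens_val :: "(nat \<Rightarrow> real) \<Rightarrow> tree list \<Rightarrow> real" where
  "ens_val x F = (\<Sum>i < length F. tree_val x (F ! i))"

definition fbin :: "(nat \<Rightarrow> real) \<Rightarrow> tree list \<Rightarrow> nat" where
  "fbin x F = (if 1 / (1 + exp (- ens_val x F)) > 0.5 then 1 else 0)"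

definition referenced :: "real set \<Rightarrow> nat \<Rightarrow> tree list \<Rightarrow> nat set \<Rightarrow> bool" where
  "referenced D n F Vf \<longleftrightarrow> Vf \<subseteq> {1..n} \<and>
     (\<forall>T \<in> set F. \<forall>j < length T. \<forall>x \<in> points D n. \<forall>x' \<in> points D n.
        (\<forall>i \<in> Vf. x i = x' i) \<longrightarrow> (x \<in> fst (T ! j) \<longleftrightarrow> x' \<in> fst (T ! j)))"

definition Valid :: "real set \<Rightarrow> nat \<Rightarrow> tree list \<Rightarrow> nat \<Rightarrow> (nat \<Rightarrow> ival) \<Rightarrow> bool" where
  "Valid D n F d xh \<longleftrightarrow> (\<forall>x \<in> PiE {1..n} (\<lambda>i. gamma D (xh i)). fbin x F = d)"

definition proc_step :: "real set \<Rightarrow> nat \<Rightarrow> tree list \<Rightarrow> nat \<Rightarrow> nat set \<Rightarrow> (nat \<Rightarrow> real)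
    \<Rightarrow> nat set \<times> (nat \<Rightarrow> ival) \<Rightarrow> nat \<Rightarrow> nat set \<times> (nat \<Rightarrow> ival)" where
  "proc_step D n F d Vf c st i =
     (let S = fst st; xh' = (snd st)(i := top_iv D) in
      if i \<in> Vf then
        (if Valid D n F d xh' then (S \<union> {i}, xh')
         else (S, xh'(i := alpha {c i})))
      else (S, xh'))"

definition procedure :: "real set \<Rightarrow> nat \<Rightarrow> tree list \<Rightarrow> nat set \<Rightarrow> (nat \<Rightarrow> real) \<Rightarrow> nat set" where
  "procedure D n F Vf c =
     (let d = fbin c F;
          st = foldl (proc_step D n F d Vf c) ({}, \<lambda>i. alpha {c i}) [1..<n+1]
      in Vf - fst st)"

text \<open>Explanations: sets of pairs (i, c_i), meaning feature x_i fixed to c_i.\<close>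
definition valid_expl :: "real set \<Rightarrow> nat \<Rightarrow> tree list \<Rightarrow> nat \<Rightarrow> (nat \<times> real) set \<Rightarrow> bool" where
  "valid_expl D n F d E \<longleftrightarrow>
     (\<forall>x \<in> points D n. (\<forall>(i, v) \<in> E. x i = v) \<longrightarrow> fbin x F = d)"

definition minimal_expl :: "real set \<Rightarrow> nat \<Rightarrow> tree list \<Rightarrow> nat \<Rightarrow> (nat \<times> real) set \<Rightarrow> bool" where
  "minimal_expl D n F d E \<longleftrightarrow> valid_expl D n F d E \<and>
     (\<forall>E' \<subset> E. \<not> valid_expl D n F d E')"

end

theory Submission
  imports Defs
begin

lemma gamma_single: "gamma D (alpha {a}) = {a} \<inter> D"
  by (auto simp: gamma_def alpha_def)

lemma gamma_top: "finite D \<Longrightarrow> D \<noteq> {} \<Longrightarrow> gamma D (top_iv D) = D"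
  by (auto simp: gamma_def top_iv_def alpha_def)

lemma fbin_inv:
  assumes "referenced D n F Vf" "x \<in> points D n" "x' \<in> points D n" "\<forall>i\<in>Vf. x i = x' i"
  shows "fbin x F = fbin x' F"
proof -
  have "tree_val x (F ! k) = tree_val x' (F ! k)" if "k < length F" for k
  proof -
    have T: "F ! k \<in> set F" using that by simp
    have "\<And>j. j < length (F ! k) \<Longrightarrow> (x \<in> fst (F ! k ! j)) = (x' \<in> fst (F ! k ! j))"
      using assms T unfolding referenced_def by blast
    then have "(\<lambda>y. \<exists>j < length (F!k). x \<in> fst (F!k ! j) \<and> y = snd (F!k ! j))
             = (\<lambda>y. \<exists>j < length (F!k). x' \<in> fst (F!k ! j) \<and> y = snd (F!k ! j))"
      by (intro ext) blast
    then show ?thesis unfolding tree_val_def by simp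
  qed
  then have "ens_val x F = ens_val x' F" unfolding ens_val_def by (intro sum.cong) auto
  then show ?thesis unfolding fbin_def by simp
qed

lemma PiE_gamma_points: "x \<in> PiE {1..n} (\<lambda>i. gamma D (xh i)) \<Longrightarrow> x \<in> points D n"
  unfolding points_def gamma_def by (auto simp: PiE_def Pi_def)

definition inv_st where
  "inv_st D n F d Vf c k st \<longleftrightarrow>
     fst st \<subseteq> Vf \<inter> {1..k} \<and>
     (\<forall>j. snd st j = (if 1 \<le> j \<and> j \<le> k \<and> (j \<notin> Vf \<or> j \<in> fst st) then top_iv D else alpha {c j})) \<and>
     Valid D n F d (snd st) \<and>
     (\<forall>i \<in> (Vf \<inter> {1..k}) - fst st. \<exists>x \<in> points D n. fbin x F \<noteq> d \<and>
        (\<forall>j\<in>{1..n}. j \<noteq> i \<longrightarrow> (j > i \<or> (j \<in> Vf \<and> j \<notin> fst st)) \<longrightarrow> x j = c j))"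

lemma invariant:
  assumes fin: "finite D" and ne: "D \<noteq> {}"
    and ref: "referenced D n F Vf"
    and cp: "c \<in> points D n"
    and dd: "d = fbin c F"
  shows "k \<le> n \<Longrightarrow> inv_st D n F d Vf c k (foldl (proc_step D n F d Vf c) ({}, \<lambda>i. alpha {c i}) [1..<k+1])"
proof (induction k)
  case 0
  have "Valid D n F d (\<lambda>i. alpha {c i})"
    unfolding Valid_def
  proof
    fix x assume x: "x \<in> PiE {1..n} (\<lambda>i. gamma D (alpha {c i}))"
    have "x = c"
    proof
      fix j show "x j = c j"
        using x cp by (cases "j \<in> {1..n}") (auto simp: gamma_single points_def PiE_def extensional_def)
    qed
    then show "fbin x F = d" using dd by simp
  qed
  then show ?case unfolding inv_st_def by simp
next
  case (Suc k)
  let ?st = "foldl (proc_step D n F d Vf c) ({}, \<lambda>i. alpha {c i}) [1..<k+1]"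
  obtain S xh where st: "?st = (S, xh)" by fastforce
  have IH: "inv_st D n F d Vf c k (S, xh)" using Suc st by simp
  have eq: "foldl (proc_step D n F d Vf c) ({}, \<lambda>i. alpha {c i}) [1..<Suc k+1]
      = proc_step D n F d Vf c (S, xh) (Suc k)" using st by simp
  let ?i = "Suc k"
  define xh' where "xh' = xh(?i := top_iv D)"
  have Sk: "S \<subseteq> Vf \<inter> {1..k}" and xhd: "\<And>j. xh j = (if 1 \<le> j \<and> j \<le> k \<and> (j \<notin> Vf \<or> j \<in> S) then top_iv D else alpha {c j})"
    and V: "Valid D n F d xh"
    and W: "\<forall>i \<in> (Vf \<inter> {1..k}) - S. \<exists>x \<in> points D n. fbin x F \<noteq> d \<and>
        (\<forall>j\<in>{1..n}. j \<noteq> i \<longrightarrow> (j > i \<or> (j \<in> Vf \<and> j \<notin> S)) \<longrightarrow> x j = c j)"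
    using IH unfolding inv_st_def by auto
  have ci: "c ?i \<in> D" using cp Suc.prems by (auto simp: points_def PiE_def Pi_def)
  have xhi: "xh ?i = alpha {c ?i}" using xhd by simp
  show ?case
  proof (cases "?i \<in> Vf")
    case False
    have res: "proc_step D n F d Vf c (S, xh) ?i = (S, xh')"
      using False unfolding proc_step_def xh'_def by simp
    have "Valid D n F d xh'"
      unfolding Valid_def
    proof
      fix y assume y: "y \<in> PiE {1..n} (\<lambda>j. gamma D (xh' j))"
      define y' where "y' = y(?i := c ?i)"
      have y': "y' \<in> PiE {1..n} (\<lambda>j. gamma D (xh j))"
        using y ci Suc.prems unfolding y'_def xh'_def
        by (auto simp: PiE_def Pi_def extensional_def xhi gamma_single split: if_splits)
      have "fbin y F = fbin y' F"
        by (rule fbin_inv[OF ref PiE_gamma_points[OF y] PiE_gamma_points[OF y']])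
           (use False in \<open>auto simp: y'_def\<close>)
      also have "\<dots> = d" using V y' unfolding Valid_def by blast
      finally show "fbin y F = d" .
    qed
    moreover have "S \<subseteq> Vf \<inter> {1..Suc k}" using Sk by auto
    moreover have "\<forall>j. xh' j = (if 1 \<le> j \<and> j \<le> Suc k \<and> (j \<notin> Vf \<or> j \<in> S) then top_iv D else alpha {c j})"
      using xhd False unfolding xh'_def by auto
    moreover have "\<forall>i \<in> (Vf \<inter> {1..Suc k}) - S. \<exists>x \<in> points D n. fbin x F \<noteq> d \<and>
        (\<forall>j\<in>{1..n}. j \<noteq> i \<longrightarrow> (j > i \<or> (j \<in> Vf \<and> j \<notin> S)) \<longrightarrow> x j = c j)"
      using W False by (metis Diff_iff IntD1 IntD2 IntI atLeastAtMost_iff le_SucE)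
    ultimately show ?thesis unfolding eq res inv_st_def by simp
  next
    case True
    show ?thesis
    proof (cases "Valid D n F d xh'")
      case Vt: True
      have res: "proc_step D n F d Vf c (S, xh) ?i = (S \<union> {?i}, xh')"
        using True Vt unfolding proc_step_def xh'_def by simp
      have "S \<union> {?i} \<subseteq> Vf \<inter> {1..Suc k}" using Sk True by auto
      moreover have "\<forall>j. xh' j = (if 1 \<le> j \<and> j \<le> Suc k \<and> (j \<notin> Vf \<or> j \<in> S \<union> {?i}) then top_iv D else alpha {c j})"
        using xhd True Sk unfolding xh'_def by auto
      moreover have "\<forall>i \<in> (Vf \<inter> {1..Suc k}) - (S \<union> {?i}). \<exists>x \<in> points D n. fbin x F \<noteq> d \<and>
        (\<forall>j\<in>{1..n}. j \<noteq> i \<longrightarrow> (j > i \<or> (j \<in> Vf \<and> j \<notin> S \<union> {?i})) \<longrightarrow> x j = c j)"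
      proof
        fix i assume i: "i \<in> (Vf \<inter> {1..Suc k}) - (S \<union> {?i})"
        then have "i \<in> (Vf \<inter> {1..k}) - S" by auto
        then obtain x where "x \<in> points D n" "fbin x F \<noteq> d"
          "\<forall>j\<in>{1..n}. j \<noteq> i \<longrightarrow> (j > i \<or> (j \<in> Vf \<and> j \<notin> S)) \<longrightarrow> x j = c j"
          using W by blast
        then show "\<exists>x \<in> points D n. fbin x F \<noteq> d \<and>
        (\<forall>j\<in>{1..n}. j \<noteq> i \<longrightarrow> (j > i \<or> (j \<in> Vf \<and> j \<notin> S \<union> {?i})) \<longrightarrow> x j = c j)" by auto
      qed
      ultimately show ?thesis unfolding eq res inv_st_def using Vt by simp
    next
      case Vf: False
      have xx: "xh'(?i := alpha {c ?i}) = xh" unfolding xh'_def using xhi by auto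
      have res: "proc_step D n F d Vf c (S, xh) ?i = (S, xh)"
        using True Vf xhi unfolding proc_step_def xh'_def by (simp add: Let_def fun_upd_idem)
      obtain x where x: "x \<in> PiE {1..n} (\<lambda>j. gamma D (xh' j))" and fx: "fbin x F \<noteq> d"
        using Vf unfolding Valid_def by blast
      have wit: "\<forall>j\<in>{1..n}. j \<noteq> ?i \<longrightarrow> (j > ?i \<or> (j \<in> Vf \<and> j \<notin> S)) \<longrightarrow> x j = c j"
      proof (intro ballI impI)
        fix j assume j: "j \<in> {1..n}" "j \<noteq> ?i" "j > ?i \<or> (j \<in> Vf \<and> j \<notin> S)"
        then have "xh' j = alpha {c j}" unfolding xh'_def using xhd by auto
        then show "x j = c j" using x j(1) by (auto simp: PiE_def Pi_def gamma_single)
      qed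
      have "S \<subseteq> Vf \<inter> {1..Suc k}" using Sk by auto
      moreover have "\<forall>j. xh j = (if 1 \<le> j \<and> j \<le> Suc k \<and> (j \<notin> Vf \<or> j \<in> S) then top_iv D else alpha {c j})"
      proof
        fix j show "xh j = (if 1 \<le> j \<and> j \<le> Suc k \<and> (j \<notin> Vf \<or> j \<in> S) then top_iv D else alpha {c j})"
          using xhd[of j] True Sk by (cases "j = Suc k") auto
      qed
      moreover have "\<forall>i \<in> (Vf \<inter> {1..Suc k}) - S. \<exists>x \<in> points D n. fbin x F \<noteq> d \<and>
        (\<forall>j\<in>{1..n}. j \<noteq> i \<longrightarrow> (j > i \<or> (j \<in> Vf \<and> j \<notin> S)) \<longrightarrow> x j = c j)"
      proof
        fix i assume i: "i \<in> (Vf \<inter> {1..Suc k}) - S"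
        show "\<exists>x \<in> points D n. fbin x F \<noteq> d \<and>
        (\<forall>j\<in>{1..n}. j \<noteq> i \<longrightarrow> (j > i \<or> (j \<in> Vf \<and> j \<notin> S)) \<longrightarrow> x j = c j)"
        proof (cases "i = ?i")
          case True
          then show ?thesis using wit fx PiE_gamma_points[OF x] by blast
        next
          case False
          then show ?thesis using W i by auto
        qed
      qed
      ultimately show ?thesis unfolding eq res inv_st_def using V by simp
    qed
  qed
qed

theorem mainTheorem8:
  fixes D :: "real set" and n :: nat and F :: "tree list" and Vf :: "nat set"
    and c :: "nat \<Rightarrow> real" and d :: nat
  assumes "finite D" and "D \<noteq> {}"
    and "\<forall>T \<in> set F. is_tree D n T"
    and "referenced D n F Vf"
    and "c \<in> points D n"
    and "d = fbin c F"
  shows "minimal_expl D n F d {(i, c i) | i. i \<in> procedure D n F Vf c}"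
proof -
  let ?st = "foldl (proc_step D n F d Vf c) ({}, \<lambda>i. alpha {c i}) [1..<n+1]"
  obtain S xh where st: "?st = (S, xh)" by fastforce
  have I: "inv_st D n F d Vf c n (S, xh)"
    using invariant[OF assms(1,2,4,5,6), of n] st by simp
  have proc: "procedure D n F Vf c = Vf - S"
    unfolding procedure_def using st assms(6) by (simp add: Let_def)
  have Vsub: "Vf \<subseteq> {1..n}" using assms(4) unfolding referenced_def by simp
  have xhd: "\<And>j. xh j = (if 1 \<le> j \<and> j \<le> n \<and> (j \<notin> Vf \<or> j \<in> S) then top_iv D else alpha {c j})"
    and V: "Valid D n F d xh"
    and W: "\<forall>i \<in> (Vf \<inter> {1..n}) - S. \<exists>x \<in> points D n. fbin x F \<noteq> d \<and>
        (\<forall>j\<in>{1..n}. j \<noteq> i \<longrightarrow> (j > i \<or> (j \<in> Vf \<and> j \<notin> S)) \<longrightarrow> x j = c j)"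
    using I unfolding inv_st_def by auto
  let ?E = "{(i, c i) | i. i \<in> Vf - S}"
  have valid: "valid_expl D n F d ?E"
    unfolding valid_expl_def
  proof (intro ballI impI)
    fix x assume x: "x \<in> points D n" and ag: "\<forall>(i, v) \<in> ?E. x i = v"
    have "x \<in> PiE {1..n} (\<lambda>j. gamma D (xh j))"
    proof -
      have "x j \<in> gamma D (xh j)" if j: "j \<in> {1..n}" for j
      proof (cases "j \<notin> Vf \<or> j \<in> S")
        case True
        then show ?thesis using xhd[of j] j x gamma_top[OF assms(1,2)]
          by (auto simp: points_def PiE_def Pi_def)
      next
        case False
        then have "x j = c j" using ag by auto
        moreover have "c j \<in> D" using assms(5) j by (auto simp: points_def PiE_def Pi_def)
        ultimately show ?thesis using xhd[of j] False by (simp add: gamma_single)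
      qed
      moreover have "x \<in> extensional {1..n}" using x by (simp add: points_def PiE_def)
      ultimately show ?thesis by (auto simp: PiE_def Pi_def)
    qed
    then show "fbin x F = d" using V unfolding Valid_def by blast
  qed
  have minimal: "\<forall>E' \<subset> ?E. \<not> valid_expl D n F d E'"
  proof (intro allI impI notI)
    fix E' assume sub: "E' \<subset> ?E" and ve: "valid_expl D n F d E'"
    obtain p where p: "p \<in> ?E" "p \<notin> E'" using sub by blast
    then obtain i where i: "i \<in> Vf - S" "p = (i, c i)" by blast
    then obtain x where x: "x \<in> points D n" "fbin x F \<noteq> d"
      "\<forall>j\<in>{1..n}. j \<noteq> i \<longrightarrow> (j > i \<or> (j \<in> Vf \<and> j \<notin> S)) \<longrightarrow> x j = c j"
      using W Vsub by blast
    have "\<forall>(j, v) \<in> E'. x j = v"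
    proof (intro ballI, clarify)
      fix j v assume jv: "(j, v) \<in> E'"
      then have "(j, v) \<in> ?E" using sub by blast
      then have j: "j \<in> Vf - S" "v = c j" by auto
      have "j \<noteq> i" using jv p i j by auto
      then show "x j = v" using x(3) j Vsub by auto
    qed
    then show False using ve x unfolding valid_expl_def by blast
  qed
  show ?thesis unfolding proc minimal_expl_def using valid minimal by blast
qed

end
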